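(* If $\delta$ is a positive real number with $\delta\le\inf_{0<\varepsilon<1}\Delta(\varepsilon)/\varepsilon^2$, then $R(g,n)\le\delta^{-1/2}\sqrt{gn}$ for all integers $n\ge g\ge1$.
   Context: A set $S$ of integers is a $B^*[g]$ set if for every integer $m$ there are at most $g$ ordered pairs $(s_1,s_2)\in S\times S$ with $s_1+s_2=m$. $R(g,n)$ is the maximum cardinality of a $B^*[g]$ set contained in $\{1,2,\dots,n\}$. Let $\lambda$ be Lebesgue measure; a set $C\subseteq\mathbb{R}$ is symmetric if there is $c$ with $c+x\in C\iff c-x\in C$; $D(A):=\sup\{\lambda(C): C\subseteq A \text{ measurable and symmetric}\}$, and $\Delta(\varepsilon):=\inf\{D(A): A\subseteq[0,1) \text{ measurable},\ \lambda(A)=\varepsilon\}$. *)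

theory Defs
  imports "HOL-Analysis.Analysis"
begin

definition Bstar :: "nat \<Rightarrow> int set \<Rightarrow> bool" where
  "Bstar g S \<longleftrightarrow> (\<forall>m::int. card {(s1, s2). s1 \<in> S \<and> s2 \<in> S \<and> s1 + s2 = m} \<le> g)"

definition R :: "nat \<Rightarrow> nat \<Rightarrow> nat" where
  "R g n = Max {card S | S. S \<subseteq> {1..int n} \<and> Bstar g S}"

definition symmetric_set :: "real set \<Rightarrow> bool" where
  "symmetric_set C \<longleftrightarrow> (\<exists>c. \<forall>x. c + x \<in> C \<longleftrightarrow> c - x \<in> C)"

definition D :: "real set \<Rightarrow> real" where
  "D A = Sup {measure lebesgue C | C. C \<subseteq> A \<and> C \<in> sets lebesgue \<and> symmetric_set C}"

definition Delta :: "real \<Rightarrow> real" where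
  "Delta \<epsilon> = Inf {D A | A. A \<subseteq> {0..<1} \<and> A \<in> sets lebesgue \<and> measure lebesgue A = \<epsilon>}"

end

theory Submission
  imports Defs
begin


lemma ml_Icc: "measure lebesgue {l..u::real} = max 0 (u - l)"
  by (cases "l \<le> u") (auto simp: measure_completion)

lemma ml_Ico: "l \<le> u \<Longrightarrow> measure lebesgue {l..<u::real} = u - l"
  by (auto simp: measure_completion)

lemma comb:
  fixes P :: "'a set" and h :: "'a \<Rightarrow> int" and u :: real
  assumes "finite P" "\<And>m. card {p\<in>P. h p = m} \<le> g"
  shows "(\<Sum>p\<in>P. max 0 (1 - \<bar>real_of_int (h p) - u\<bar>)) \<le> real g"
proof -
  define m0 where "m0 = \<lfloor>u\<rfloor>"
  define \<theta> where "\<theta> = u - m0"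
  have m0: "real_of_int m0 \<le> u" "u < real_of_int m0 + 1" unfolding m0_def by linarith+
  have pt: "max 0 (1 - \<bar>real_of_int (h p) - u\<bar>) \<le> (if h p = m0 then 1-\<theta> else 0) + (if h p = m0+1 then \<theta> else 0)" for p
  proof -
    have "h p \<le> m0 - 1 \<or> h p = m0 \<or> h p = m0 + 1 \<or> h p \<ge> m0 + 2" by linarith
    moreover have "h p \<le> m0 - 1 \<Longrightarrow> real_of_int (h p) \<le> real_of_int m0 - 1" by linarith
    moreover have "h p \<ge> m0 + 2 \<Longrightarrow> real_of_int (h p) \<ge> real_of_int m0 + 2" by linarith
    ultimately show ?thesis using m0 unfolding \<theta>_def by auto
  qed
  have "(\<Sum>p\<in>P. max 0 (1 - \<bar>real_of_int (h p) - u\<bar>)) \<le> (\<Sum>p\<in>P. (if h p = m0 then 1-\<theta> else 0) + (if h p = m0+1 then \<theta> else 0))"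
    by (rule sum_mono) (rule pt)
  also have "\<dots> = (\<Sum>p\<in>{p\<in>P. h p = m0}. 1-\<theta>) + (\<Sum>p\<in>{p\<in>P. h p = m0+1}. \<theta>)"
    by (simp add: sum.distrib sum.inter_filter[OF assms(1), symmetric])
  also have "\<dots> = card {p\<in>P. h p = m0} * (1-\<theta>) + card {p\<in>P. h p = m0+1} * \<theta>" by simp
  also have "\<dots> \<le> g * (1-\<theta>) + g * \<theta>"
    using assms(2)[of m0] assms(2)[of "m0+1"] m0 unfolding \<theta>_def
    by (intro add_mono mult_right_mono) auto
  finally show ?thesis by (simp add: algebra_simps)
qed

lemma min_div: "0 < (n::real) \<Longrightarrow> min (a/n) (b/n) = min a b / n"
  by (auto simp: min_def divide_le_cancel)
lemma max_div: "0 < (n::real) \<Longrightarrow> max (a/n) (b/n) = max a b / n"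
  by (auto simp: max_def divide_le_cancel)

lemma key:
  fixes S :: "int set" and n g :: nat and c :: real and C A :: "real set"
  assumes n: "n > 0" and S: "S \<subseteq> {1..int n}" and B: "Bstar g S"
    and A_def: "A = (\<Union>s\<in>S. {real_of_int (s-1)/n ..< real_of_int s/n})"
    and C: "C \<subseteq> A" "C \<in> sets lebesgue" "\<forall>x. c + x \<in> C \<longleftrightarrow> c - x \<in> C"
  shows "measure lebesgue C \<le> g / n"
proof -
  define v where "v = 2*c*n"
  define K where "K p = {max (real_of_int (fst p - 1)/n) ((v - snd p)/n) .. min (real_of_int (fst p)/n) ((v - snd p + 1)/n)}" for p :: "int\<times>int"
  have nr: "real n > 0" using n by simp
  have fin: "finite S" using S finite_subset by blast
  have finP: "finite (S \<times> S)" using fin by simp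
  have e1: "(v - t)/n = 2*c - t/n" for t :: real using nr unfolding v_def by (simp add: field_simps)
  have e2: "(v - t + 1)/n = 2*c - (t - 1)/n" for t :: real using nr unfolding v_def by (simp add: field_simps)
  have sub: "C \<subseteq> (\<Union>p\<in>S\<times>S. K p)"
  proof
    fix x assume x: "x \<in> C"
    then obtain s where s: "s \<in> S" "real_of_int (s-1)/n \<le> x" "x < real_of_int s/n"
      using C(1) unfolding A_def by auto
    have "c + (x - c) \<in> C" using x by simp
    then have "c - (x - c) \<in> C" using C(3) by blast
    moreover have "c - (x - c) = 2*c - x" by simp
    ultimately have "2*c - x \<in> A" using C(1) by auto
    then obtain t where t: "t \<in> S" "real_of_int (t-1)/n \<le> 2*c - x" "2*c - x < real_of_int t/n"
      unfolding A_def by auto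
    have "(v - real_of_int t)/n \<le> x" using e1[of "real_of_int t"] t(3) by linarith
    moreover have "x \<le> (v - real_of_int t + 1)/n" using e2[of "real_of_int t"] t(2) of_int_diff[of t 1] by simp
    ultimately have "x \<in> K (s,t)" unfolding K_def using s by simp
    then show "x \<in> (\<Union>p\<in>S\<times>S. K p)" using s t by blast
  qed
  have cK: "compact (\<Union>p\<in>S\<times>S. K p)" using finP unfolding K_def by (intro compact_UN) auto
  have "measure lebesgue C \<le> measure lebesgue (\<Union>p\<in>S\<times>S. K p)"
    by (rule measure_mono_fmeasurable[OF sub C(2) lmeasurable_compact[OF cK]])
  also have "\<dots> \<le> (\<Sum>p\<in>S\<times>S. measure lebesgue (K p))"
    by (rule measure_UNION_le[OF finP]) (auto simp: K_def)
  also have "\<dots> = (\<Sum>p\<in>S\<times>S. max 0 (1 - \<bar>real_of_int (fst p + snd p) - (v+1)\<bar>) / n)"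
  proof (rule sum.cong[OF refl])
    fix p :: "int \<times> int"
    obtain s t where p: "p = (s,t)" by fastforce
    have "measure lebesgue (K p) = max 0 (min (real_of_int s) (v - t + 1) / n - max (real_of_int (s - 1)) (v - t) / n)"
      unfolding K_def p ml_Icc using min_div[OF nr] max_div[OF nr] by simp
    also have "\<dots> = max 0 ((min (real_of_int s) (v - t + 1) - max (real_of_int (s - 1)) (v - t)) / n)"
      by (simp add: diff_divide_distrib)
    also have "\<dots> = max 0 (min (real_of_int s) (v - t + 1) - max (real_of_int (s - 1)) (v - t)) / n"
      using nr by (simp add: max_div[OF nr, symmetric])
    also have "min (real_of_int s) (v - t + 1) - max (real_of_int (s - 1)) (v - t) = 1 - \<bar>real_of_int (s + t) - (v+1)\<bar>"
      unfolding min_def max_def abs_if by simp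
    finally show "measure lebesgue (K p) = max 0 (1 - \<bar>real_of_int (fst p + snd p) - (v+1)\<bar>) / n"
      by (simp add: p)
  qed
  also have "\<dots> = (\<Sum>p\<in>S\<times>S. max 0 (1 - \<bar>real_of_int (fst p + snd p) - (v+1)\<bar>)) / n"
    by (simp add: sum_divide_distrib)
  also have "\<dots> \<le> g / n"
  proof (rule divide_right_mono[OF comb[OF finP]])
    fix m
    have "{p \<in> S \<times> S. fst p + snd p = m} = {(s1, s2). s1 \<in> S \<and> s2 \<in> S \<and> s1 + s2 = m}" by auto
    moreover have "card {(s1, s2). s1 \<in> S \<and> s2 \<in> S \<and> s1 + s2 = m} \<le> g" using B unfolding Bstar_def by blast
    ultimately show "card {p \<in> S \<times> S. fst p + snd p = m} \<le> g" by simp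
  qed simp
  finally show ?thesis .
qed



lemma D_bounds:
  assumes "A \<subseteq> {0..<1}" "A \<in> sets lebesgue"
  shows "0 \<le> D A" "D A \<le> measure lebesgue A"
proof -
  let ?X = "{measure lebesgue C | C. C \<subseteq> A \<and> C \<in> sets lebesgue \<and> symmetric_set C}"
  have sym0: "symmetric_set {}" unfolding symmetric_set_def by simp
  have Af: "A \<in> lmeasurable"
    by (rule bounded_set_imp_lmeasurable[OF _ assms(2)])
       (rule bounded_subset[OF bounded_closed_interval[of 0 1]], use assms(1) in auto)
  have ub: "x \<le> measure lebesgue A" if "x \<in> ?X" for x
    using that measure_mono_fmeasurable[OF _ _ Af] by auto
  have ne: "0 \<in> ?X" using sym0 by force
  have bdd: "bdd_above ?X" unfolding bdd_above_def using ub by blast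
  show "0 \<le> D A" unfolding D_def by (rule cSup_upper[OF ne bdd])
  show "D A \<le> measure lebesgue A" unfolding D_def by (rule cSup_least) (use ne ub in auto)
qed

lemma Delta_nonneg:
  assumes "0 \<le> e" "e < 1"
  shows "0 \<le> Delta e"
proof -
  have "{0..<e} \<in> {A. A \<subseteq> {0..<1} \<and> A \<in> sets lebesgue \<and> measure lebesgue A = e}"
    using assms by (auto simp: ml_Ico)
  then have ne: "{D A | A. A \<subseteq> {0..<1} \<and> A \<in> sets lebesgue \<and> measure lebesgue A = e} \<noteq> {}" by blast
  show ?thesis unfolding Delta_def
    by (rule cInf_greatest[OF ne]) (use D_bounds in auto)
qed

lemma Delta_le:
  assumes "A \<subseteq> {0..<1}" "A \<in> sets lebesgue" "measure lebesgue A = e"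
  shows "Delta e \<le> D A"
proof -
  have bdd: "bdd_below {D A | A. A \<subseteq> {0..<1} \<and> A \<in> sets lebesgue \<and> measure lebesgue A = e}"
    by (rule bdd_belowI[of _ 0]) (use D_bounds in auto)
  show ?thesis unfolding Delta_def by (rule cInf_lower[OF _ bdd]) (use assms in blast)
qed

lemma Delta_le_e:
  assumes "0 \<le> e" "e < 1"
  shows "Delta e \<le> e"
proof -
  have "Delta e \<le> D {0..<e}" by (rule Delta_le) (use assms in \<open>auto simp: ml_Ico\<close>)
  also have "\<dots> \<le> measure lebesgue {0..<e}" by (rule D_bounds) (use assms in auto)
  finally show ?thesis using assms by (simp add: ml_Ico)
qed

theorem corollary3p2:
  fixes \<delta> :: real and g n :: nat
  assumes "\<delta> > 0"
    and "\<delta> \<le> Inf {Delta \<epsilon> / \<epsilon>^2 | \<epsilon>. 0 < \<epsilon> \<and> \<epsilon> < 1}"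
    and "1 \<le> g" and "g \<le> n"
  shows "real (R g n) \<le> \<delta> powr (-1/2) * sqrt (real g * real n)"
proof -
  have hd: "\<delta> \<le> Delta e / e^2" if "0 < e" "e < 1" for e
  proof -
    have bdd: "bdd_below {Delta \<epsilon> / \<epsilon>^2 | \<epsilon>. 0 < \<epsilon> \<and> \<epsilon> < 1}"
      by (rule bdd_belowI[of _ 0]) (auto intro!: divide_nonneg_nonneg Delta_nonneg)
    have "Inf {Delta \<epsilon> / \<epsilon>^2 | \<epsilon>. 0 < \<epsilon> \<and> \<epsilon> < 1} \<le> Delta e / e^2"
      by (rule cInf_lower[OF _ bdd]) (use that in blast)
    then show ?thesis using assms(2) by linarith
  qed
  have d1: "\<delta> \<le> 1"
  proof (rule ccontr)
    assume "\<not> \<delta> \<le> 1"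
    define e where "e = (1 + 1/\<delta>)/2"
    have e: "0 < e" "e < 1" "1/\<delta> < e" using \<open>\<not> \<delta> \<le> 1\<close> by (auto simp: e_def field_simps)
    have "\<delta> \<le> Delta e / e^2" by (rule hd) (use e in auto)
    also have "\<dots> \<le> e / e^2" using Delta_le_e[of e] e by (intro divide_right_mono) auto
    also have "\<dots> = 1/e" by (simp add: power2_eq_square)
    also have "\<dots> < \<delta>" using e \<open>\<not> \<delta> \<le> 1\<close> by (auto simp: field_simps)
    finally show False by simp
  qed
  have sym0: "Bstar g {}" by (simp add: Bstar_def)
  define F where "F = {card S | S. S \<subseteq> {1..int n} \<and> Bstar g S}"
  have Ffin: "finite F"
  proof -
    have "F \<subseteq> card ` Pow {1..int n}" unfolding F_def by auto
    then show ?thesis using finite_subset by blast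
  qed
  have Fne: "F \<noteq> {}" unfolding F_def using sym0 by blast
  have "R g n \<in> F" unfolding R_def F_def[symmetric] by (rule Max_in[OF Ffin Fne])
  then obtain S where S: "R g n = card S" "S \<subseteq> {1..int n}" "Bstar g S" unfolding F_def by blast
  define k where "k = card S"
  have fin: "finite S" using S(2) finite_subset by blast
  have kn: "k \<le> n" unfolding k_def using card_mono[OF _ S(2)] by simp
  have dpos: "\<delta> powr (-1/2) = 1 / sqrt \<delta>"
    using assms(1) by (simp add: powr_minus_divide powr_half_sqrt)
  have goal: "real k \<le> \<delta> powr (-1/2) * sqrt (real g * real n)" if hk: "real k ^ 2 * \<delta> \<le> real g * real n"
  proof -
    have "real k * sqrt \<delta> = sqrt (real k ^ 2 * \<delta>)" by (simp add: real_sqrt_mult)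
    also have "\<dots> \<le> sqrt (real g * real n)" using hk by (rule real_sqrt_le_mono)
    finally show ?thesis using assms(1) unfolding dpos by (simp add: field_simps)
  qed
  show ?thesis
  proof (cases "k = 0")
    case True then show ?thesis using S(1) k_def by simp
  next
    case k0: False
    show ?thesis
    proof (cases "k = n")
      case True
      have Seq: "S = {1..int n}" using card_subset_eq[OF _ S(2)] True k_def by simp
      let ?P = "{(s1, s2). s1 \<in> S \<and> s2 \<in> S \<and> s1 + s2 = int n + 1}"
      have "(\<lambda>s. (s, int n + 1 - s)) ` {1..int n} \<subseteq> ?P" using Seq by auto
      moreover have "finite ?P" by (rule finite_subset[of _ "S \<times> S"]) (use fin in auto)
      ultimately have "card ((\<lambda>s. (s, int n + 1 - s)) ` {1..int n}) \<le> card ?P" by (rule card_mono[rotated])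
      moreover have "card ((\<lambda>s. (s, int n + 1 - s)) ` {1..int n}) = n"
        by (subst card_image) (auto simp: inj_on_def)
      moreover have "card ?P \<le> g" using S(3) unfolding Bstar_def by blast
      ultimately have "n \<le> g" by simp
      then have "real k ^ 2 * \<delta> \<le> real g * real n"
        using True d1 assms(1) mult_left_mono[of \<delta> 1 "real n * real n"] mult_right_mono[of "real n" "real g" "real n"]
        by (simp add: power2_eq_square)
      then show ?thesis using goal S(1) k_def by simp
    next
      case False
      then have kn': "k < n" using kn by simp
      have n0: "n > 0" using kn' by simp
      have nr: "real n > 0" using n0 by simp
      define A where "A = (\<Union>s\<in>S. {real_of_int (s-1)/n ..< real_of_int s/n})"
      have Asub: "A \<subseteq> {0..<1}"
      proof
        fix x assume "x \<in> A"
        then obtain s where s: "s \<in> S" "real_of_int (s-1)/n \<le> x" "x < real_of_int s/n" unfolding A_def by auto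
        have "1 \<le> s" "s \<le> int n" using s(1) S(2) by auto
        then have "0 \<le> real_of_int (s-1)/n" "real_of_int s/n \<le> 1" using nr by (auto simp: field_simps)
        then show "x \<in> {0..<1}" using s by auto
      qed
      have Ameas: "A \<in> sets lebesgue" unfolding A_def using fin by auto
      have disj: "disjoint_family_on (\<lambda>s. {real_of_int (s-1)/n ..< real_of_int s/n}) S"
      proof (unfold disjoint_family_on_def, intro ballI impI)
        fix s t assume st: "s \<in> S" "t \<in> S" "s \<noteq> t"
        show "{real_of_int (s-1)/n ..< real_of_int s/n} \<inter> {real_of_int (t-1)/n ..< real_of_int t/n} = {}"
        proof (rule ccontr)
          assume "\<not> ?thesis"
          then obtain x where x: "x \<in> {real_of_int (s-1)/n ..< real_of_int s/n} \<inter> {real_of_int (t-1)/n ..< real_of_int t/n}" by blast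
          have "real_of_int (s-1)/n \<le> x" "x < real_of_int s/n" "real_of_int (t-1)/n \<le> x" "x < real_of_int t/n"
            using x by (simp_all only: Int_iff atLeastLessThan_iff)
          then have "real_of_int (s-1)/n < real_of_int t/n" "real_of_int (t-1)/n < real_of_int s/n" by auto
          then have "real_of_int (s-1) < real_of_int t" "real_of_int (t-1) < real_of_int s"
            using nr by (auto simp: divide_less_cancel)
          then have "s - 1 < t" "t - 1 < s" by linarith+
          then show False using st by linarith
        qed
      qed
      have le_ab: "(real_of_int s - 1)/n \<le> real_of_int s / n" for s
        using nr by (simp add: divide_right_mono)
      have mA: "measure lebesgue A = real k / n"
      proof -
        have "measure lebesgue A = (\<Sum>s\<in>S. measure lebesgue {real_of_int (s-1)/n ..< real_of_int s/n})"
          unfolding A_def by (rule measure_finite_Union[OF fin _ disj]) (auto simp: emeasure_completion le_ab)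
        also have "\<dots> = (\<Sum>s\<in>S. 1 / n)"
        proof (rule sum.cong[OF refl])
          fix s
          have "real_of_int (s-1)/n \<le> real_of_int s/n" using nr by (simp add: divide_right_mono)
          then show "measure lebesgue {real_of_int (s-1)/n ..< real_of_int s/n} = 1/n"
            by (simp add: ml_Ico diff_divide_distrib[symmetric])
        qed
        finally show ?thesis by (simp add: k_def)
      qed
      have DA: "D A \<le> real g / n"
        unfolding D_def
      proof (rule cSup_least)
        show "{measure lebesgue C | C. C \<subseteq> A \<and> C \<in> sets lebesgue \<and> symmetric_set C} \<noteq> {}"
        proof -
          have "symmetric_set {}" unfolding symmetric_set_def by simp
          then have "0 \<in> {measure lebesgue C | C. C \<subseteq> A \<and> C \<in> sets lebesgue \<and> symmetric_set C}" by force
          then show ?thesis by blast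
        qed
      next
        fix x assume "x \<in> {measure lebesgue C | C. C \<subseteq> A \<and> C \<in> sets lebesgue \<and> symmetric_set C}"
        then obtain C c where C: "x = measure lebesgue C" "C \<subseteq> A" "C \<in> sets lebesgue" "\<forall>x. c + x \<in> C \<longleftrightarrow> c - x \<in> C"
          unfolding symmetric_set_def by blast
        show "x \<le> real g / n" unfolding C(1) by (rule key[OF n0 S(2) S(3) A_def C(2) C(3) C(4)])
      qed
      define e where "e = real k / n"
      have e: "0 < e" "e < 1" using k0 kn' nr by (auto simp: e_def field_simps)
      have "\<delta> \<le> Delta e / e^2" by (rule hd[OF e])
      also have "\<dots> \<le> D A / e^2"
        by (intro divide_right_mono Delta_le[OF Asub Ameas]) (auto simp: mA e_def)
      also have "\<dots> \<le> (real g / n) / e^2" by (intro divide_right_mono DA) auto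
      also have "\<dots> = real g * n / real k ^ 2" using nr k0 by (simp add: e_def field_simps power2_eq_square)
      finally have "\<delta> * real k ^ 2 \<le> real g * n" using k0 by (simp add: field_simps)
      then show ?thesis using goal S(1) k_def by (simp add: mult.commute)
    qed
  qed
qed

end
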